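(* Let $(X,X')$ and $(Y,Y')$ be two Banach couples and let $A\colon X\to Y$ be a bounded linear operator. If there exists an adversarial sequence for $A$ relative to $X'$ and $Y'$, then there exists an adversarial perturbation for $A$ relative to $X'$ and $Y'$.
   Context: A Banach couple is a pair of Banach spaces each of which is continuously embedded in a common Hausdorff topological vector space; set operations such as $X\cap X'$ are taken inside this ambient space via the embeddings. For $z$ in the ambient space of $(Y,Y')$, set $\|z\|_{Y'}=\infty$ if $z\notin Y'$. Given Banach couples $(X,X')$, $(Y,Y')$ and a bounded linear $A\colon X\to Y$: (i) an element $r\in X\cap X'$ is an adversarial perturbation for $A$ (relative to $X'$ and $Y'$) if $Ar\notin Y'$, i.e. $\|Ar\|_{Y'}=\infty$; (ii) a sequence $(r_n)_{n\in\mathbb{N}}$ in $X\cap X'$ is an adversarial sequence for $A$ (relative to $X'$ and $Y'$) if $(r_n)$ is bounded in both $X$ and $X'$ while $(Ar_n)$ is unbounded in $Y'$ (i.e. $\sup_n \|Ar_n\|_{Y'}=\infty$). *)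

theory Defs
  imports "HOL-Analysis.Analysis"
begin

definition hausdorff_tvs :: "'v::{real_vector,t2_space} itself \<Rightarrow> bool" where
  "hausdorff_tvs _ \<longleftrightarrow>
     continuous_on UNIV (\<lambda>p::'v \<times> 'v. fst p + snd p) \<and>
     continuous_on UNIV (\<lambda>p::real \<times> 'v. fst p *\<^sub>R snd p)"

definition cont_embedding :: "('x::banach \<Rightarrow> 'v::{real_vector,t2_space}) \<Rightarrow> bool" where
  "cont_embedding j \<longleftrightarrow> linear j \<and> inj j \<and> continuous_on UNIV j"

text \<open>Banach couple (X, X'), realised by the embeddings jX, jX' into the ambient space.\<close>
definition banach_couple ::
  "('x::banach \<Rightarrow> 'v::{real_vector,t2_space}) \<Rightarrow> ('x2::banach \<Rightarrow> 'v) \<Rightarrow> bool" where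
  "banach_couple jX jX' \<longleftrightarrow> hausdorff_tvs TYPE('v) \<and> cont_embedding jX \<and> cont_embedding jX'"

definition emb_norm :: "('x::banach \<Rightarrow> 'v) \<Rightarrow> 'v \<Rightarrow> ereal" where
  "emb_norm j z = (if z \<in> range j then ereal (norm (inv j z)) else \<infinity>)"

text \<open>Adversarial perturbation: r in X \<inter> X' (r given as an element of X whose image lies
  in X') with A r not in Y'.\<close>
definition adversarial_perturbation ::
  "('x::banach \<Rightarrow> 'v) \<Rightarrow> ('x2::banach \<Rightarrow> 'v) \<Rightarrow> ('y::banach \<Rightarrow> 'w) \<Rightarrow> ('y2::banach \<Rightarrow> 'w)
    \<Rightarrow> ('x \<Rightarrow> 'y) \<Rightarrow> 'x \<Rightarrow> bool" where
  "adversarial_perturbation jX jX' jY jY' A r \<longleftrightarrow>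
     jX r \<in> range jX' \<and> jY (A r) \<notin> range jY'"

definition adversarial_sequence ::
  "('x::banach \<Rightarrow> 'v) \<Rightarrow> ('x2::banach \<Rightarrow> 'v) \<Rightarrow> ('y::banach \<Rightarrow> 'w) \<Rightarrow> ('y2::banach \<Rightarrow> 'w)
    \<Rightarrow> ('x \<Rightarrow> 'y) \<Rightarrow> (nat \<Rightarrow> 'x) \<Rightarrow> bool" where
  "adversarial_sequence jX jX' jY jY' A r \<longleftrightarrow>
     (\<forall>n. jX (r n) \<in> range jX') \<and>
     (\<exists>C. \<forall>n. norm (r n) \<le> C) \<and>
     (\<exists>C. \<forall>n. emb_norm jX' (jX (r n)) \<le> ereal C) \<and>
     (SUP n. emb_norm jY' (jY (A (r n)))) = \<infinity>"

end

theory Submission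
  imports Defs
begin

lemma closed_graph_sub:
  fixes B :: "'a::banach \<Rightarrow> 'b::banach"
  assumes Scl: "closed S" and Ssub: "subspace S"
  and add: "\<And>x y. x \<in> S \<Longrightarrow> y \<in> S \<Longrightarrow> B (x + y) = B x + B y"
  and scale: "\<And>c x. x \<in> S \<Longrightarrow> B (c *\<^sub>R x) = c *\<^sub>R B x"
  and graph: "\<And>s x y. (\<forall>n. s n \<in> S) \<Longrightarrow> s \<longlonglongrightarrow> x \<Longrightarrow> (\<lambda>n. B (s n)) \<longlonglongrightarrow> y \<Longrightarrow> B x = y"
  shows "\<exists>K\<ge>0. \<forall>x\<in>S. norm (B x) \<le> K * norm x"
proof -
  have S0: "0 \<in> S" using Ssub by (rule subspace_0)
  have Sadd: "x + y \<in> S" if "x \<in> S" "y \<in> S" for x y using Ssub that by (rule subspace_add)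
  have Sscale: "c *\<^sub>R x \<in> S" if "x \<in> S" for c x using Ssub that by (simp add: subspace_scale)
  have Sdiff: "x - y \<in> S" if "x \<in> S" "y \<in> S" for x y using Ssub that by (rule subspace_diff)
  have B0: "B 0 = 0" using scale[OF S0, of 0] by simp
  have Bdiff: "B (x - y) = B x - B y" if "x \<in> S" "y \<in> S" for x y
  proof -
    have "B (x + (-1) *\<^sub>R y) = B x + (-1) *\<^sub>R B y"
      using add[OF that(1) Sscale[OF that(2)]] scale[OF that(2)] by presburger
    moreover have "x + (-1) *\<^sub>R y = x - y" by simp
    ultimately show ?thesis by simp
  qed
  define E where "E k = {x\<in>S. norm (B x) \<le> real k}" for k :: nat
  have ES: "E k \<subseteq> S" for k unfolding E_def by auto
  have "\<exists>k. top_of_set S interior_of (closure (E k) \<inter> S) \<noteq> {}"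
  proof (rule ccontr)
    assume H: "\<not> ?thesis"
    have "top_of_set S interior_of \<Union> (range (\<lambda>k. closure (E k) \<inter> S)) = {}"
    proof (rule Baire_category_alt)
      show "completely_metrizable_space (top_of_set S) \<or> locally_compact_space (top_of_set S) \<and> regular_space (top_of_set S)"
        using completely_metrizable_space_closedin completely_metrizable_space_euclidean Scl
        by (metis closed_closedin)
      show "countable (range (\<lambda>k. closure (E k) \<inter> S))" by simp
      fix T assume "T \<in> range (\<lambda>k. closure (E k) \<inter> S)"
      then obtain k where T: "T = closure (E k) \<inter> S" by auto
      show "closedin (top_of_set S) T \<and> top_of_set S interior_of T = {}"
        using H T by (metis closed_closure closedin_closed_Int inf_commute)
    qed
    moreover have "\<Union> (range (\<lambda>k. closure (E k) \<inter> S)) = S"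
    proof
      show "\<Union> (range (\<lambda>k. closure (E k) \<inter> S)) \<subseteq> S" by auto
      show "S \<subseteq> \<Union> (range (\<lambda>k. closure (E k) \<inter> S))"
      proof
        fix x assume x: "x \<in> S"
        have "x \<in> E (nat \<lceil>norm (B x)\<rceil>)" unfolding E_def using x real_nat_ceiling_ge by auto
        then show "x \<in> \<Union> (range (\<lambda>k. closure (E k) \<inter> S))" using x closure_subset by blast
      qed
    qed
    moreover have "top_of_set S interior_of S = S"
      using interior_of_topspace[of "top_of_set S"] by simp
    ultimately show False using S0 by auto
  qed
  then obtain k p where "p \<in> top_of_set S interior_of (closure (E k) \<inter> S)" by blast
  then obtain U where U: "openin (top_of_set S) U" "p \<in> U" "U \<subseteq> closure (E k) \<inter> S"
    unfolding interior_of_def by blast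
  then obtain V where V: "open V" "U = S \<inter> V" using openin_open by blast
  then obtain \<delta> where \<delta>: "\<delta> > 0" "ball p \<delta> \<subseteq> V" using U(2) open_contains_ball by blast
  have pS: "p \<in> S" using U by blast
  have pc: "p \<in> closure (E k)" using U by blast
  have inc: "z \<in> closure (E k)" if "z \<in> S" "dist z p < \<delta>" for z
    using that \<delta> U V by (auto simp: dist_commute)
  have A1: "\<exists>w\<in>S. norm (z - w) < \<epsilon> \<and> norm (B w) \<le> 2 * real k"
    if z: "z \<in> S" "norm z < \<delta>" and e: "\<epsilon> > 0" for z \<epsilon>
  proof -
    have "p + z \<in> closure (E k)" using inc[of "p + z"] z pS Sadd by (simp add: dist_norm)
    then obtain u where u: "u \<in> E k" "dist u (p + z) < \<epsilon>/2"
      using e closure_approachable by (metis half_gt_zero)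
    obtain v where v: "v \<in> E k" "dist v p < \<epsilon>/2"
      using pc e closure_approachable by (metis half_gt_zero)
    have uS: "u \<in> S" and vS: "v \<in> S" using u v ES by auto
    have "z - (u - v) = (v - p) - (u - (p + z))" by (simp add: algebra_simps)
    then have "norm (z - (u - v)) \<le> norm (v - p) + norm (u - (p + z))"
      by (metis norm_triangle_ineq4)
    then have "norm (z - (u - v)) < \<epsilon>" using u v by (simp add: dist_norm)
    moreover have "norm (B (u - v)) \<le> 2 * real k"
    proof -
      have "norm (B (u - v)) = norm (B u - B v)" using Bdiff uS vS by simp
      also have "\<dots> \<le> norm (B u) + norm (B v)" by (rule norm_triangle_ineq4)
      also have "\<dots> \<le> 2 * real k" using u v unfolding E_def by auto
      finally show ?thesis .
    qed
    ultimately show ?thesis using Sdiff uS vS by blast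
  qed
  define M where "M = 4 * real k / \<delta>"
  have M0: "M \<ge> 0" unfolding M_def using \<delta> by simp
  have A2: "\<exists>w. w \<in> S \<and> norm (z - w) < \<epsilon> \<and> norm (B w) \<le> M * norm z"
    if z: "z \<in> S" and e: "\<epsilon> > 0" for z \<epsilon>
  proof (cases "z = 0")
    case True
    then show ?thesis using S0 B0 e by (intro exI[of _ 0]) simp
  next
    case False
    define l where "l = \<delta> / (2 * norm z)"
    have l0: "l > 0" unfolding l_def using False \<delta> by simp
    have "norm (l *\<^sub>R z) = \<delta> / 2" unfolding l_def using False \<delta> by simp
    then have "norm (l *\<^sub>R z) < \<delta>" using \<delta> by simp
    then obtain w' where w': "w' \<in> S" "norm (l *\<^sub>R z - w') < l * \<epsilon>" "norm (B w') \<le> 2 * real k"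
      using A1[OF Sscale[OF z] _ mult_pos_pos[OF l0 e]] by blast
    define w where "w = (1 / l) *\<^sub>R w'"
    have "z - w = (1 / l) *\<^sub>R (l *\<^sub>R z - w')" unfolding w_def using l0 by (simp add: algebra_simps)
    then have "norm (z - w) = (1 / l) * norm (l *\<^sub>R z - w')" using l0 by simp
    also have "\<dots> < (1 / l) * (l * \<epsilon>)" using w'(2) l0 by (intro mult_strict_left_mono) auto
    also have "\<dots> = \<epsilon>" using l0 by simp
    finally have 1: "norm (z - w) < \<epsilon>" .
    have "norm (B w) = (1 / l) * norm (B w')" unfolding w_def using scale[OF w'(1)] l0 by simp
    also have "\<dots> \<le> (1 / l) * (2 * real k)" using w'(3) l0 by (intro mult_left_mono) auto
    also have "\<dots> = M * norm z" unfolding l_def M_def using False \<delta> by (simp add: field_simps)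
    finally show ?thesis using 1 w'(1) Sscale unfolding w_def by blast
  qed
  define W where "W z \<epsilon> = (SOME w. w \<in> S \<and> norm (z - w) < \<epsilon> \<and> norm (B w) \<le> M * norm z)" for z \<epsilon>
  have W: "W z \<epsilon> \<in> S \<and> norm (z - W z \<epsilon>) < \<epsilon> \<and> norm (B (W z \<epsilon>)) \<le> M * norm z"
    if "z \<in> S" "\<epsilon> > 0" for z \<epsilon>
    unfolding W_def by (rule someI_ex) (rule A2[OF that])
  have main: "norm (B s) \<le> 2 * M * norm s" if sS: "s \<in> S" for s
  proof (cases "s = 0")
    case True then show ?thesis using B0 by simp
  next
    case False
    define \<epsilon> where "\<epsilon> j = norm s / 2 ^ (Suc j)" for j :: nat
    have \<epsilon>0: "\<epsilon> j > 0" for j unfolding \<epsilon>_def using False by simp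
    define e where "e = rec_nat s (\<lambda>j e. e - W e (\<epsilon> j))"
    have e0: "e 0 = s" and eS': "e (Suc j) = e j - W (e j) (\<epsilon> j)" for j unfolding e_def by simp_all
    define w where "w j = W (e j) (\<epsilon> j)" for j
    have eS: "e j \<in> S" for j
    proof (induction j)
      case 0 then show ?case using e0 sS by simp
    next
      case (Suc j) then show ?case using eS' W[OF Suc \<epsilon>0] Sdiff by simp
    qed
    have wS: "w j \<in> S" for j unfolding w_def using W[OF eS \<epsilon>0] by simp
    have en: "norm (e j) \<le> norm s / 2 ^ j" for j
    proof (cases j)
      case 0 then show ?thesis using e0 by simp
    next
      case (Suc i)
      have "norm (e (Suc i)) < \<epsilon> i" using eS'[of i] W[OF eS \<epsilon>0, of i i] by simp
      then show ?thesis using Suc unfolding \<epsilon>_def by simp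
    qed
    have wB: "norm (B (w j)) \<le> M * norm s * (1/2) ^ j" for j
    proof -
      have "norm (B (w j)) \<le> M * norm (e j)" unfolding w_def using W[OF eS \<epsilon>0] by simp
      also have "\<dots> \<le> M * (norm s / 2 ^ j)" using en M0 by (intro mult_left_mono) auto
      finally show ?thesis by (simp add: power_one_over)
    qed
    have wsum: "(\<Sum>j<n. w j) = s - e n" for n
    proof (induction n)
      case 0 then show ?case using e0 by simp
    next
      case (Suc n) then show ?case using eS'[of n] unfolding w_def by simp
    qed
    have sumS: "(\<Sum>j<n. w j) \<in> S" for n using wsum eS sS Sdiff by simp
    have Bsum: "B (\<Sum>j<n. w j) = (\<Sum>j<n. B (w j))" for n
    proof (induction n)
      case 0 then show ?case using B0 by simp
    next
      case (Suc n) then show ?case using add[OF sumS wS] by simp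
    qed
    have g0: "(\<lambda>n. norm s / 2 ^ n) \<longlonglongrightarrow> 0"
      by (intro tendsto_divide_0[OF tendsto_const]) (simp add: filterlim_realpow_sequentially_gt1)
    have "(\<lambda>n. e n) \<longlonglongrightarrow> 0"
      by (rule Lim_null_comparison[OF _ g0]) (use en in simp)
    then have lim1: "(\<lambda>n. \<Sum>j<n. w j) \<longlonglongrightarrow> s"
      using tendsto_diff[OF tendsto_const[of s], of e 0] wsum by simp
    have gs: "summable (\<lambda>j. M * norm s * (1/2::real) ^ j)"
      by (intro summable_mult summable_geometric) simp
    have nsum: "summable (\<lambda>j. norm (B (w j)))"
      using wB by (intro summable_comparison_test[OF _ gs] exI[of _ 0]) simp
    then have sm: "summable (\<lambda>j. B (w j))" by (rule summable_norm_cancel)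
    have "(\<lambda>n. B (\<Sum>j<n. w j)) \<longlonglongrightarrow> (\<Sum>j. B (w j))"
      using summable_LIMSEQ[OF sm] Bsum by simp
    then have Bs: "B s = (\<Sum>j. B (w j))" by (rule graph[OF allI[OF sumS] lim1])
    have "norm (\<Sum>j. B (w j)) \<le> (\<Sum>j. norm (B (w j)))" by (rule summable_norm[OF nsum])
    also have "\<dots> \<le> (\<Sum>j. M * norm s * (1/2::real) ^ j)" by (rule suminf_le[OF wB nsum gs])
    also have "\<dots> = 2 * M * norm s" using suminf_geometric[of "1/2::real"]
      by (simp add: suminf_mult)
    finally show ?thesis using Bs by simp
  qed
  show ?thesis using main M0 by (intro exI[of _ "2 * M"]) auto
qed

theorem theorem2p3:
  fixes jX :: "'x::banach \<Rightarrow> 'v::{real_vector,t2_space}"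
    and jX' :: "'x2::banach \<Rightarrow> 'v"
    and jY :: "'y::banach \<Rightarrow> 'w::{real_vector,t2_space}"
    and jY' :: "'y2::banach \<Rightarrow> 'w"
    and A :: "'x \<Rightarrow> 'y"
  assumes "banach_couple jX jX'"
    and "banach_couple jY jY'"
    and "bounded_linear A"
    and "\<exists>r. adversarial_sequence jX jX' jY jY' A r"
  shows "\<exists>r. adversarial_perturbation jX jX' jY jY' A r"
proof (rule ccontr)
  assume "\<not> ?thesis"
  then have np: "\<And>x. jX x \<in> range jX' \<Longrightarrow> jY (A x) \<in> range jY'"
    unfolding adversarial_perturbation_def by blast
  have linX: "linear jX" and contX: "continuous_on UNIV jX"
    and linX': "linear jX'" and contX': "continuous_on UNIV jX'"
    using assms(1) unfolding banach_couple_def cont_embedding_def by auto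
  have linY: "linear jY" and contY: "continuous_on UNIV jY"
    and linY': "linear jY'" and contY': "continuous_on UNIV jY'" and injY': "inj jY'"
    using assms(2) unfolding banach_couple_def cont_embedding_def by auto
  have linA: "linear A" using assms(3) bounded_linear.linear by blast
  define S where "S = {p :: 'x \<times> 'x2. jX (fst p) = jX' (snd p)}"
  define B where "B p = inv jY' (jY (A (fst p)))" for p :: "'x \<times> 'x2"
  have Bin: "jY' (B p) = jY (A (fst p))" if "p \<in> S" for p
  proof -
    have "jX (fst p) \<in> range jX'" using that unfolding S_def by auto
    then have "jY (A (fst p)) \<in> range jY'" by (rule np)
    then show ?thesis unfolding B_def by (simp add: f_inv_into_f)
  qed
  have Beq: "B p = y" if "p \<in> S" "jY' y = jY (A (fst p))" for p y
    using Bin[OF that(1)] that(2) injY' by (metis injD)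
  have Scl: "closed S" unfolding S_def
    by (intro closed_Collect_eq continuous_on_compose2[OF contX continuous_on_fst]
        continuous_on_compose2[OF contX' continuous_on_snd] continuous_on_id) auto
  have Ssub: "subspace S" unfolding subspace_def S_def
    using linX linX' by (auto simp: linear_add linear_scale linear_0)
  have "\<exists>K\<ge>0. \<forall>x\<in>S. norm (B x) \<le> K * norm x"
  proof (rule closed_graph_sub[OF Scl Ssub])
    fix x y assume xy: "x \<in> S" "y \<in> S"
    have "x + y \<in> S" by (rule subspace_add[OF Ssub xy])
    moreover have "jY' (B x + B y) = jY (A (fst (x + y)))"
      using Bin[OF xy(1)] Bin[OF xy(2)] linY' linY linA by (simp add: linear_add)
    ultimately show "B (x + y) = B x + B y" by (rule Beq)
  next
    fix c x assume x: "x \<in> S"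
    then have "c *\<^sub>R x \<in> S" using Ssub by (simp add: subspace_scale)
    moreover have "jY' (c *\<^sub>R B x) = jY (A (fst (c *\<^sub>R x)))"
      using Bin[OF x] linY' linY linA by (simp add: linear_scale)
    ultimately show "B (c *\<^sub>R x) = c *\<^sub>R B x" by (rule Beq)
  next
    fix s x y assume sS: "\<forall>n. s n \<in> S" and sx: "s \<longlonglongrightarrow> x" and By: "(\<lambda>n. B (s n)) \<longlonglongrightarrow> y"
    have xS: "x \<in> S" using Scl sS sx closed_sequentially by blast
    have lA: "(\<lambda>n. A (fst (s n))) \<longlonglongrightarrow> A (fst x)"
      using bounded_linear.tendsto[OF assms(3) tendsto_fst[OF sx]] .
    have l1: "(\<lambda>n. jY (A (fst (s n)))) \<longlonglongrightarrow> jY (A (fst x))"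
      using continuous_on_tendsto_compose[OF contY lA] by simp
    have l2: "(\<lambda>n. jY' (B (s n))) \<longlonglongrightarrow> jY' y"
      using continuous_on_tendsto_compose[OF contY' By] by simp
    have "(\<lambda>n. jY' (B (s n))) = (\<lambda>n. jY (A (fst (s n))))" using Bin sS by auto
    then have "(\<lambda>n. jY (A (fst (s n)))) \<longlonglongrightarrow> jY' y" using l2 by simp
    then have "jY' y = jY (A (fst x))" using l1 by (rule LIMSEQ_unique)
    then show "B x = y" by (rule Beq[OF xS])
  qed
  then obtain K where K0: "K \<ge> 0" and K: "\<And>x. x \<in> S \<Longrightarrow> norm (B x) \<le> K * norm x" by blast
  obtain r where ras: "adversarial_sequence jX jX' jY jY' A r" using assms(4) by blast
  have r1: "\<And>n. jX (r n) \<in> range jX'" and e1: "\<exists>C. \<forall>n. norm (r n) \<le> C"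
    and e2: "\<exists>C. \<forall>n. emb_norm jX' (jX (r n)) \<le> ereal C"
    and sup: "(SUP n. emb_norm jY' (jY (A (r n)))) = \<infinity>"
    using ras unfolding adversarial_sequence_def by auto
  obtain C1 where r2: "\<And>n. norm (r n) \<le> C1" using e1 by blast
  obtain C2 where r3: "\<And>n. emb_norm jX' (jX (r n)) \<le> ereal C2" using e2 by blast
  note r = r1 r2 r3
  define s where "s n = (r n, inv jX' (jX (r n)))" for n
  have sS: "s n \<in> S" for n unfolding s_def S_def using r(1) by (simp add: f_inv_into_f)
  have n2: "norm (inv jX' (jX (r n))) \<le> C2" for n
    using r(1)[of n] r(3)[of n] unfolding emb_norm_def by simp
  have ns: "norm (s n) \<le> C1 + C2" for n
    using norm_Pair_le[of "r n" "inv jX' (jX (r n))"] r(2)[of n] n2[of n] unfolding s_def by simp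
  have bnd: "emb_norm jY' (jY (A (r n))) \<le> ereal (K * (C1 + C2))" for n
  proof -
    have "jY (A (r n)) \<in> range jY'" using np r(1) by blast
    then have "emb_norm jY' (jY (A (r n))) = ereal (norm (B (s n)))"
      unfolding emb_norm_def B_def s_def by simp
    moreover have "norm (B (s n)) \<le> K * (C1 + C2)"
      using K[OF sS] ns K0 by (meson mult_left_mono order_trans)
    ultimately show ?thesis by simp
  qed
  have "(SUP n. emb_norm jY' (jY (A (r n)))) \<le> ereal (K * (C1 + C2))"
    by (rule SUP_least) (rule bnd)
  then show False using sup by simp
qed

end
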